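(* Let $R$ be a Bézout domain and let $A,B,C\in R^{n\times n}$ satisfy $ABA=ACA$. If $AB$ and $CA$ are group invertible, then $(AB)^2(AB)^{D}$ is similar to $(CA)^2(CA)^{D}$.
   Context: A Bézout domain is an integral domain in which every finitely generated ideal is principal. A matrix $M\in R^{n\times n}$ is Drazin invertible if there exists $X\in R^{n\times n}$ with $MX=XM$, $XMX=X$ and $M^{m+1}X=M^m$ for some nonnegative integer $m$; such $X$ is unique and denoted $M^D$. $M$ is group invertible if this holds with $m=1$ (equivalently $MX=XM$, $XMX=X$, $MXM=M$). Two matrices $M,N\in R^{n\times n}$ are similar if $M=S^{-1}NS$ for some invertible $S\in R^{n\times n}$. *)

theory Defs
  imports "Jordan_Normal_Form.Matrix"
begin

definition ideal_gen :: "'a::comm_ring_1 set \<Rightarrow> 'a set" where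
  "ideal_gen S = {x. \<exists>f. x = (\<Sum>a\<in>S. f a * a)}"

definition bezout_domain :: "'a::idom itself \<Rightarrow> bool" where
  "bezout_domain _ \<longleftrightarrow>
     (\<forall>S::'a set. finite S \<longrightarrow> (\<exists>d. ideal_gen S = {d * r | r. True}))"

definition is_drazin_inverse :: "nat \<Rightarrow> 'a::comm_ring_1 mat \<Rightarrow> 'a mat \<Rightarrow> bool" where
  "is_drazin_inverse n M X \<longleftrightarrow> X \<in> carrier_mat n n \<and> M * X = X * M \<and> X * M * X = X \<and>
     (\<exists>m. M ^\<^sub>m (m + 1) * X = M ^\<^sub>m m)"

definition drazin_invertible :: "nat \<Rightarrow> 'a::comm_ring_1 mat \<Rightarrow> bool" where
  "drazin_invertible n M \<longleftrightarrow> (\<exists>X. is_drazin_inverse n M X)"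

definition drazin_inv :: "nat \<Rightarrow> 'a::comm_ring_1 mat \<Rightarrow> 'a mat" where
  "drazin_inv n M = (THE X. is_drazin_inverse n M X)"

text \<open>Group invertibility: the Drazin conditions with index m = 1.\<close>
definition group_invertible :: "nat \<Rightarrow> 'a::comm_ring_1 mat \<Rightarrow> bool" where
  "group_invertible n M \<longleftrightarrow> (\<exists>X. X \<in> carrier_mat n n \<and> M * X = X * M \<and> X * M * X = X \<and>
     M ^\<^sub>m 2 * X = M)"

end

theory Submission
  imports Defs "Jordan_Normal_Form.Determinant"
begin

lemma bezout2:
  fixes a b :: "'a::idom"
  assumes bz: "bezout_domain TYPE('a)"
  shows "\<exists>x y a' b' d. a = d * a' \<and> b = d * b' \<and> x * a' + y * b' = 1"
proof -
  obtain d where d: "ideal_gen {a, b} = {d * r | r. True}"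
    using bz unfolding bezout_domain_def by (meson finite.emptyI finite.insertI)
  have "a \<in> ideal_gen {a, b}" unfolding ideal_gen_def
  proof (intro CollectI exI[of _ "\<lambda>s. if s = a then 1 else 0"])
    show "a = (\<Sum>s\<in>{a, b}. (if s = a then 1 else 0) * s)"
      by (cases "a = b") auto
  qed
  then obtain a' where a': "a = d * a'" using d by auto
  have "b \<in> ideal_gen {a, b}" unfolding ideal_gen_def
  proof (intro CollectI exI[of _ "\<lambda>s. if s = b then 1 else 0"])
    show "b = (\<Sum>s\<in>{a, b}. (if s = b then 1 else 0) * s)"
      by (cases "a = b") auto
  qed
  then obtain b' where b': "b = d * b'" using d by auto
  have "d \<in> ideal_gen {a, b}" using d by (auto intro: exI[of _ 1])
  then obtain f where f: "d = (\<Sum>s\<in>{a, b}. f s * s)" unfolding ideal_gen_def by auto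
  show ?thesis
  proof (cases "d = 0")
    case True
    then have "a = 0 * 1" "b = 0 * 0" using a' b' by auto
    then show ?thesis by (intro exI[of _ 1] exI[of _ 0]) auto
  next
    case False
    show ?thesis
    proof (cases "a = b")
      case True
      then have "d = f a * a" using f by simp
      then have "d * 1 = d * (f a * a')" using a' by (simp add: ac_simps)
      then have "f a * a' + 0 * b' = 1" using False by simp
      then show ?thesis using a' b' by blast
    next
      case ne: False
      then have "d = f a * a + f b * b" using f by simp
      then have "d * 1 = d * (f a * a' + f b * b')" using a' b' by (simp add: algebra_simps)
      then have "f a * a' + f b * b' = 1" using False by (metis mult_left_cancel)
      then show ?thesis using a' b' by blast
    qed
  qed
qed

lemma sum_single: fixes f :: "nat \<Rightarrow> 'a::comm_monoid_add"
  assumes "i < n" "\<And>m. m < n \<Longrightarrow> m \<noteq> i \<Longrightarrow> f m = 0"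
  shows "sum f {0..<n} = f i"
proof -
  have "sum f {0..<n} = f i + sum f ({0..<n} - {i})" using assms(1) by (subst sum.remove[of _ i]) auto
  also have "sum f ({0..<n} - {i}) = 0" using assms(2) by (intro sum.neutral) auto
  finally show ?thesis by simp
qed

lemma sum3: fixes f :: "nat \<Rightarrow> 'a::comm_monoid_add"
  assumes "k < n" "l < n" "k \<noteq> l" "\<And>m. m < n \<Longrightarrow> m \<noteq> k \<Longrightarrow> m \<noteq> l \<Longrightarrow> m \<noteq> i \<Longrightarrow> f m = 0"
  shows "sum f {0..<n} = f k + f l + (if i = k \<or> i = l \<or> i \<ge> n then 0 else f i)"
proof -
  let ?S = "{k, l} \<union> (if i = k \<or> i = l \<or> i \<ge> n then {} else {i})"
  have "sum f {0..<n} = sum f ?S" using assms by (intro sum.mono_neutral_right) auto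
  also have "\<dots> = f k + f l + (if i = k \<or> i = l \<or> i \<ge> n then 0 else f i)"
  proof (cases "i = k \<or> i = l \<or> i \<ge> n")
    case True
    then show ?thesis using assms(3) by simp
  next
    case False
    then have "?S = insert i {k, l}" by auto
    then show ?thesis using assms(3) False by (simp add: add.commute add.left_commute)
  qed
  finally show ?thesis .
qed

lemma mult_entry: assumes "A \<in> carrier_mat n n" "B \<in> carrier_mat n n" "i < n" "j < n"
  shows "(A * B) $$ (i, j) = (\<Sum>m\<in>{0..<n}. A $$ (i, m) * B $$ (m, j))"
  using assms by (simp add: scalar_prod_def)

lemma mv_entry: assumes "A \<in> carrier_mat n n" "v \<in> carrier_vec n" "i < n"
  shows "(A *\<^sub>v v) $ i = (\<Sum>m\<in>{0..<n}. A $$ (i, m) * v $ m)"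
  using assms by (simp add: scalar_prod_def)

definition idk :: "nat \<Rightarrow> nat \<Rightarrow> 'a::zero_neq_one mat \<Rightarrow> bool" where
  "idk n k G \<longleftrightarrow> (\<forall>i<n. \<forall>j<n. (i < k \<or> j < k) \<longrightarrow> G $$ (i, j) = (if i = j then 1 else 0))"

lemma idk_mult: fixes A B :: "'a::comm_ring_1 mat"
  assumes A: "A \<in> carrier_mat n n" and B: "B \<in> carrier_mat n n" and iA: "idk n k A" and iB: "idk n k B"
  shows "idk n k (A * B)"
  unfolding idk_def
proof (intro allI impI)
  fix i j assume i: "i < n" and j: "j < n" and ij: "i < k \<or> j < k"
  show "(A * B) $$ (i, j) = (if i = j then 1 else 0)"
  proof (cases "i < k")
    case True
    have "(A * B) $$ (i, j) = A $$ (i, i) * B $$ (i, j)"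
      unfolding mult_entry[OF A B i j] using True iA i
      by (intro sum_single[OF i]) (auto simp: idk_def)
    then show ?thesis using True iA iB i j by (auto simp: idk_def)
  next
    case False
    then have jk: "j < k" using ij by auto
    have "(A * B) $$ (i, j) = A $$ (i, j) * B $$ (j, j)"
      unfolding mult_entry[OF A B i j] using jk iB j
      by (intro sum_single[OF j]) (auto simp: idk_def)
    then show ?thesis using jk iA iB i j by (auto simp: idk_def)
  qed
qed

definition el :: "nat \<Rightarrow> nat \<Rightarrow> nat \<Rightarrow> 'a::comm_ring_1 \<Rightarrow> 'a \<Rightarrow> 'a \<Rightarrow> 'a \<Rightarrow> 'a mat" where
  "el n k l x y z w = mat n n (\<lambda>(i, j). if i = k \<and> j = k then x else if i = k \<and> j = l then y
     else if i = l \<and> j = k then z else if i = l \<and> j = l then w else if i = j then 1 else 0)"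

lemma el_carrier[simp]: "el n k l x y z w \<in> carrier_mat n n" unfolding el_def by simp

lemma el_index: "i < n \<Longrightarrow> j < n \<Longrightarrow> el n k l x y z w $$ (i, j) = (if i = k \<and> j = k then x else if i = k \<and> j = l then y
     else if i = l \<and> j = k then z else if i = l \<and> j = l then w else if i = j then 1 else 0)"
  unfolding el_def by simp

lemma el_simps: assumes k: "k < n" and l: "l < n" and kl: "k \<noteq> l"
  shows "el n k l x y z w $$ (k, k) = x" "el n k l x y z w $$ (k, l) = y"
    "el n k l x y z w $$ (l, k) = z" "el n k l x y z w $$ (l, l) = w"
    "\<And>j. j < n \<Longrightarrow> j \<noteq> k \<Longrightarrow> j \<noteq> l \<Longrightarrow> el n k l x y z w $$ (k, j) = 0"
    "\<And>j. j < n \<Longrightarrow> j \<noteq> k \<Longrightarrow> j \<noteq> l \<Longrightarrow> el n k l x y z w $$ (l, j) = 0"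
    "\<And>j. j < n \<Longrightarrow> j \<noteq> k \<Longrightarrow> j \<noteq> l \<Longrightarrow> el n k l x y z w $$ (j, k) = 0"
    "\<And>j. j < n \<Longrightarrow> j \<noteq> k \<Longrightarrow> j \<noteq> l \<Longrightarrow> el n k l x y z w $$ (j, l) = 0"
    "\<And>i j. i < n \<Longrightarrow> j < n \<Longrightarrow> i \<noteq> k \<Longrightarrow> i \<noteq> l \<Longrightarrow> j \<noteq> k \<Longrightarrow> j \<noteq> l \<Longrightarrow> el n k l x y z w $$ (i, j) = (if i = j then 1 else 0)"
  using k l kl by (auto simp: el_index)

lemma el_mult: assumes k: "k < n" and l: "l < n" and kl: "k \<noteq> l"
  shows "el n k l x y z w * el n k l x' y' z' w' =
    el n k l (x * x' + y * z') (x * y' + y * w') (z * x' + w * z') (z * y' + w * w')"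
proof (rule eq_matI)
  fix i j assume "i < dim_row (el n k l (x * x' + y * z') (x * y' + y * w') (z * x' + w * z') (z * y' + w * w'))"
    "j < dim_col (el n k l (x * x' + y * z') (x * y' + y * w') (z * x' + w * z') (z * y' + w * w'))"
  then have i: "i < n" and j: "j < n" by (auto simp: el_def)
  have "(el n k l x y z w * el n k l x' y' z' w') $$ (i, j) =
    (\<Sum>m\<in>{0..<n}. el n k l x y z w $$ (i, m) * el n k l x' y' z' w' $$ (m, j))"
    by (rule mult_entry[OF el_carrier el_carrier i j])
  also have "\<dots> = el n k l x y z w $$ (i, k) * el n k l x' y' z' w' $$ (k, j)
     + el n k l x y z w $$ (i, l) * el n k l x' y' z' w' $$ (l, j)
     + (if i = k \<or> i = l \<or> i \<ge> n then 0 else el n k l x y z w $$ (i, i) * el n k l x' y' z' w' $$ (i, j))"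
    apply (rule sum3[OF k l kl]) using i by (simp add: el_index)
  also have "\<dots> = el n k l (x * x' + y * z') (x * y' + y * w') (z * x' + w * z') (z * y' + w * w') $$ (i, j)"
  proof -
    have "j = k \<or> j = l \<or> (j \<noteq> k \<and> j \<noteq> l)" by blast
    moreover have "i = k \<or> i = l \<or> (i \<noteq> k \<and> i \<noteq> l)" by blast
    ultimately show ?thesis using k l kl i j
      by (elim disjE conjE) (simp_all add: el_simps[OF k l kl])
  qed
  finally show "(el n k l x y z w * el n k l x' y' z' w') $$ (i, j) = el n k l (x * x' + y * z') (x * y' + y * w') (z * x' + w * z') (z * y' + w * w') $$ (i, j)" .
qed (auto simp: el_def)

lemma el_one: "el n k l 1 0 0 1 = 1\<^sub>m n"
proof (rule eq_matI)
  fix i j assume "i < dim_row (1\<^sub>m n)" "j < dim_col (1\<^sub>m n)"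
  then have i: "i < n" and j: "j < n" by auto
  show "el n k l 1 0 0 1 $$ (i, j) = 1\<^sub>m n $$ (i, j)"
    using i j by (cases "i = j") (simp_all add: el_index)
qed (auto simp: el_def)

lemma el_vec: assumes k: "k < n" and l: "l < n" and kl: "k \<noteq> l" and v: "v \<in> carrier_vec n" and i: "i < n"
  shows "(el n k l x y z w *\<^sub>v v) $ i = (if i = k then x * v $ k + y * v $ l else if i = l then z * v $ k + w * v $ l else v $ i)"
proof -
  have "(el n k l x y z w *\<^sub>v v) $ i = (\<Sum>m\<in>{0..<n}. el n k l x y z w $$ (i, m) * v $ m)"
    by (rule mv_entry[OF el_carrier v i])
  also have "\<dots> = el n k l x y z w $$ (i, k) * v $ k + el n k l x y z w $$ (i, l) * v $ l
     + (if i = k \<or> i = l \<or> i \<ge> n then 0 else el n k l x y z w $$ (i, i) * v $ i)"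
    apply (rule sum3[OF k l kl]) using i by (simp add: el_index)
  also have "\<dots> = (if i = k then x * v $ k + y * v $ l else if i = l then z * v $ k + w * v $ l else v $ i)"
  proof -
    have "i = k \<or> i = l \<or> (i \<noteq> k \<and> i \<noteq> l)" by blast
    then show ?thesis using k l kl i
      by (elim disjE conjE) (simp_all add: el_simps[OF k l kl])
  qed
  finally show ?thesis .
qed

lemma el_idk: "k < l \<Longrightarrow> idk n k (el n k l x y z w)"
  unfolding idk_def by (simp add: el_index)

lemma one_idk: "idk n k (1\<^sub>m n)"
  unfolding idk_def by auto

lemma red:
  fixes v :: "'a::idom vec"
  assumes bz: "bezout_domain TYPE('a)" and v: "v \<in> carrier_vec n" and k: "k < n"
  shows "\<exists>G H. G \<in> carrier_mat n n \<and> H \<in> carrier_mat n n \<and> G * H = 1\<^sub>m n \<and> H * G = 1\<^sub>m n \<and>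
     idk n k G \<and> idk n k H \<and> (\<forall>i. k < i \<and> i < n \<longrightarrow> (G *\<^sub>v v) $ i = 0)"
proof -
  have "\<exists>G H. G \<in> carrier_mat n n \<and> H \<in> carrier_mat n n \<and> G * H = 1\<^sub>m n \<and> H * G = 1\<^sub>m n \<and>
     idk n k G \<and> idk n k H \<and> (\<forall>i. k < i \<and> i < n \<and> i < m \<longrightarrow> (G *\<^sub>v v) $ i = 0)" for m
  proof (induction m)
    case 0
    show ?case by (intro exI[of _ "1\<^sub>m n"]) (auto simp: one_idk)
  next
    case (Suc m)
    then obtain G H where G: "G \<in> carrier_mat n n" and H: "H \<in> carrier_mat n n" and GH: "G * H = 1\<^sub>m n"
      and HG: "H * G = 1\<^sub>m n" and iG: "idk n k G" and iH: "idk n k H"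
      and z: "\<forall>i. k < i \<and> i < n \<and> i < m \<longrightarrow> (G *\<^sub>v v) $ i = 0" by blast
    show ?case
    proof (cases "k < m \<and> m < n")
      case False
      then show ?thesis using G H GH HG iG iH z
        by (intro exI[of _ G] exI[of _ H]) (auto simp: less_Suc_eq)
    next
      case True
      then have km: "k < m" and mn: "m < n" by auto
      define w where "w = G *\<^sub>v v"
      have w: "w \<in> carrier_vec n" using G v by (simp add: w_def)
      obtain x y a' b' d where a': "w $ k = d * a'" and b': "w $ m = d * b'" and xy: "x * a' + y * b' = 1"
        using bezout2[OF bz] by blast
      define E where "E = el n k m x y (- b') a'"
      define Ei where "Ei = el n k m a' (- y) b' x"
      have kmne: "k \<noteq> m" using km by simp
      have EEi: "E * Ei = 1\<^sub>m n" unfolding E_def Ei_def el_mult[OF k mn kmne]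
        using xy by (simp add: algebra_simps el_one)
      have EiE: "Ei * E = 1\<^sub>m n" unfolding E_def Ei_def el_mult[OF k mn kmne]
        using xy by (simp add: algebra_simps el_one)
      have cE: "E \<in> carrier_mat n n" and cEi: "Ei \<in> carrier_mat n n" by (auto simp: E_def Ei_def)
      show ?thesis
      proof (rule exI[of _ "E * G"], rule exI[of _ "H * Ei"], intro conjI allI impI)
        show "E * G \<in> carrier_mat n n" "H * Ei \<in> carrier_mat n n" using cE G H cEi by auto
        show "E * G * (H * Ei) = 1\<^sub>m n"
        proof -
          have "E * G * (H * Ei) = E * (G * H) * Ei" using cE G H cEi by (simp add: assoc_mult_mat[of _ n n _ n _ n])
          thus ?thesis using GH cE EEi by simp
        qed
        show "H * Ei * (E * G) = 1\<^sub>m n"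
        proof -
          have "H * Ei * (E * G) = H * (Ei * E) * G" using cE G H cEi by (simp add: assoc_mult_mat[of _ n n _ n _ n])
          thus ?thesis using HG H EiE by simp
        qed
        show "idk n k (E * G)" using idk_mult[OF cE G _ iG] el_idk[OF km] unfolding E_def by blast
        show "idk n k (H * Ei)" using idk_mult[OF H cEi iH] el_idk[OF km] unfolding Ei_def by blast
        fix i assume i: "k < i \<and> i < n \<and> i < Suc m"
        have "(E * G *\<^sub>v v) $ i = (E *\<^sub>v w) $ i" unfolding w_def using cE G v by simp
        also have "\<dots> = (if i = k then x * w $ k + y * w $ m else if i = m then - b' * w $ k + a' * w $ m else w $ i)"
          unfolding E_def using el_vec[OF k mn kmne w] i by simp
        also have "\<dots> = 0"
        proof (cases "i = m")
          case True
          then show ?thesis using i a' b' by (simp add: algebra_simps)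
        next
          case False
          then show ?thesis using i z unfolding w_def by auto
        qed
        finally show "(E * G *\<^sub>v v) $ i = 0" .
      qed
    qed
  qed
  from this[of n] show ?thesis by auto
qed


definition Dm :: "nat \<Rightarrow> nat \<Rightarrow> 'a::zero_neq_one mat" where
  "Dm n r = mat n n (\<lambda>(i, j). if i = j \<and> i < r then 1 else 0)"

lemma Dm_carrier[simp]: "Dm n r \<in> carrier_mat n n" unfolding Dm_def by simp

lemma Dm_dims[simp]: "dim_row (Dm n r) = n" "dim_col (Dm n r) = n" unfolding Dm_def by auto

lemma Dm_index: "i < n \<Longrightarrow> j < n \<Longrightarrow> Dm n r $$ (i, j) = (if i = j \<and> i < r then 1 else 0)"
  unfolding Dm_def by simp

lemma diag_zero:
  fixes E :: "'a::comm_ring_1 mat"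
  assumes E: "E \<in> carrier_mat n n" and iE: "idk n k E"
    and z: "\<forall>i j. k \<le> i \<and> i < n \<and> k \<le> j \<and> j < n \<longrightarrow> E $$ (i, j) = 0"
  shows "E = Dm n k"
proof (rule eq_matI)
  fix i j assume "i < dim_row (Dm n k :: 'a mat)" "j < dim_col (Dm n k :: 'a mat)"
  then have i: "i < n" and j: "j < n" by (auto simp: Dm_def)
  show "E $$ (i, j) = Dm n k $$ (i, j)"
  proof (cases "i < k \<or> j < k")
    case True
    then show ?thesis using iE i j unfolding idk_def Dm_index[OF i j] by auto
  next
    case False
    then show ?thesis using z i j unfolding Dm_index[OF i j] by auto
  qed
qed (use E in auto)

lemma diag_step:
  fixes E :: "'a::idom mat"
  assumes bz: "bezout_domain TYPE('a)" and E: "E \<in> carrier_mat n n" and EE: "E * E = E"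
    and iE: "idk n k E" and k: "k < n" and i0: "i0 < n" and j0: "j0 < n" and ki0: "k \<le> i0" and kj0: "k \<le> j0"
    and nz: "E $$ (i0, j0) \<noteq> 0"
  shows "\<exists>S T E'. S \<in> carrier_mat n n \<and> T \<in> carrier_mat n n \<and> E' \<in> carrier_mat n n \<and>
    S * T = 1\<^sub>m n \<and> T * S = 1\<^sub>m n \<and> E = S * E' * T \<and> E' * E' = E' \<and> idk n (Suc k) E'"
proof -
  note ms[simp] = assoc_mult_mat[of _ n n _ n _ n] mult_carrier_mat[of _ n n _ n]
    assoc_mult_mat_vec[of _ n n _ n]
  define v where "v = col E j0"
  have v: "v \<in> carrier_vec n" using E j0 by (simp add: v_def)
  have vi: "\<And>i. i < n \<Longrightarrow> v $ i = E $$ (i, j0)" using E j0 by (simp add: v_def)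
  have vz: "\<And>i. i < k \<Longrightarrow> v $ i = 0" using iE kj0 k vi j0 unfolding idk_def by auto
  have Ev: "E *\<^sub>v v = v" unfolding v_def using col_mult2[OF E E j0] EE by simp
  obtain G H where G: "G \<in> carrier_mat n n" and H: "H \<in> carrier_mat n n" and GH: "G * H = 1\<^sub>m n"
    and HG: "H * G = 1\<^sub>m n" and iG: "idk n k G" and iH: "idk n k H"
    and red0: "\<forall>i. k < i \<and> i < n \<longrightarrow> (G *\<^sub>v v) $ i = 0"
    using red[OF bz v k] by blast
  define w where "w = G *\<^sub>v v"
  have w: "w \<in> carrier_vec n" using G v by (simp add: w_def)
  have wz: "\<And>i. i < n \<Longrightarrow> i \<noteq> k \<Longrightarrow> w $ i = 0"
  proof -
    fix i assume i: "i < n" and ik: "i \<noteq> k"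
    show "w $ i = 0"
    proof (cases "i < k")
      case True
      have "w $ i = (\<Sum>m\<in>{0..<n}. G $$ (i, m) * v $ m)" unfolding w_def by (rule mv_entry[OF G v i])
      also have "\<dots> = G $$ (i, i) * v $ i"
        by (rule sum_single[OF i]) (use iG True i in \<open>auto simp: idk_def\<close>)
      finally show ?thesis using vz True by simp
    next
      case False
      then show ?thesis using red0 i ik unfolding w_def by auto
    qed
  qed
  define c where "c = w $ k"
  have vw: "H *\<^sub>v w = v"
  proof -
    have "H *\<^sub>v w = (H * G) *\<^sub>v v" unfolding w_def using H G v by simp
    thus ?thesis using HG v by simp
  qed
  have c: "c \<noteq> 0"
  proof
    assume c0: "c = 0"
    have "v $ i0 = (H *\<^sub>v w) $ i0" unfolding vw ..
    also have "\<dots> = (\<Sum>m\<in>{0..<n}. H $$ (i0, m) * w $ m)" by (rule mv_entry[OF H w i0])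
    also have "\<dots> = H $$ (i0, k) * w $ k" by (rule sum_single[OF k]) (use wz in auto)
    finally show False using c0 nz vi[OF i0] unfolding c_def by simp
  qed
  define E1 where "E1 = G * E * H"
  have cE1: "E1 \<in> carrier_mat n n" using G E H by (simp add: E1_def)
  have E1E1: "E1 * E1 = E1"
  proof -
    have "E1 * E1 = G * (E * (H * G) * E) * H" unfolding E1_def using G E H by simp
    also have "\<dots> = E1" unfolding HG E1_def using EE E G H by simp
    finally show ?thesis .
  qed
  have iE1: "idk n k E1" unfolding E1_def using idk_mult[OF _ H idk_mult[OF G E iG iE] iH] G E by simp
  have E1w: "E1 *\<^sub>v w = w"
  proof -
    have "E1 *\<^sub>v w = G *\<^sub>v (E *\<^sub>v (H *\<^sub>v w))" unfolding E1_def using G E H w by simp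
    also have "\<dots> = w" by (simp add: vw Ev w_def[symmetric])
    finally show ?thesis .
  qed
  have colk: "\<And>i. i < n \<Longrightarrow> E1 $$ (i, k) = (if i = k then 1 else 0)"
  proof -
    fix i assume i: "i < n"
    have "w $ i = (E1 *\<^sub>v w) $ i" unfolding E1w ..
    also have "\<dots> = (\<Sum>m\<in>{0..<n}. E1 $$ (i, m) * w $ m)" by (rule mv_entry[OF cE1 w i])
    also have "\<dots> = E1 $$ (i, k) * c" unfolding c_def by (rule sum_single[OF k]) (use wz in auto)
    finally have eq: "E1 $$ (i, k) * c = w $ i" by simp
    show "E1 $$ (i, k) = (if i = k then 1 else 0)"
    proof (cases "i = k")
      case True
      then have "E1 $$ (i, k) * c = 1 * c" using eq unfolding c_def by simp
      then show ?thesis using c True by (metis mult_cancel_right)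
    next
      case False
      then have "E1 $$ (i, k) * c = 0" using eq wz i by simp
      then show ?thesis using c False by simp
    qed
  qed
  define N :: "'a mat" where "N = mat n n (\<lambda>(i, j). if i = k \<and> k < j then E1 $$ (k, j) else 0)"
  have cN: "N \<in> carrier_mat n n" unfolding N_def by simp
  have Ni: "\<And>i j. i < n \<Longrightarrow> j < n \<Longrightarrow> N $$ (i, j) = (if i = k \<and> k < j then E1 $$ (k, j) else 0)"
    unfolding N_def by simp
  have NE1: "N * E1 = 0\<^sub>m n n"
  proof (rule eq_matI)
    fix i j assume "i < dim_row (0\<^sub>m n n :: 'a mat)" "j < dim_col (0\<^sub>m n n :: 'a mat)"
    then have i: "i < n" and j: "j < n" by auto
    have "(N * E1) $$ (i, j) = (\<Sum>m\<in>{0..<n}. N $$ (i, m) * E1 $$ (m, j))" by (rule mult_entry[OF cN cE1 i j])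
    also have "\<dots> = 0"
    proof (cases "i = k")
      case False
      then show ?thesis using Ni i by (intro sum.neutral) auto
    next
      case True
      have split: "\<And>m. m \<in> {0..<n} \<Longrightarrow> E1 $$ (k, m) * E1 $$ (m, j) = (if m = k then E1 $$ (k, j) else 0) + N $$ (k, m) * E1 $$ (m, j)"
      proof -
        fix m assume "m \<in> {0..<n}"
        then have m: "m < n" by simp
        show "E1 $$ (k, m) * E1 $$ (m, j) = (if m = k then E1 $$ (k, j) else 0) + N $$ (k, m) * E1 $$ (m, j)"
        proof (cases "m < k")
          case True
          then show ?thesis using iE1 m k Ni[OF k m] unfolding idk_def by auto
        next
          case False
          then show ?thesis using colk[OF k] Ni[OF k m] by auto
        qed
      qed
      have "E1 $$ (k, j) = (E1 * E1) $$ (k, j)" using E1E1 by simp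
      also have "\<dots> = (\<Sum>m\<in>{0..<n}. E1 $$ (k, m) * E1 $$ (m, j))" by (rule mult_entry[OF cE1 cE1 k j])
      also have "\<dots> = (\<Sum>m\<in>{0..<n}. (if m = k then E1 $$ (k, j) else 0)) + (\<Sum>m\<in>{0..<n}. N $$ (k, m) * E1 $$ (m, j))"
        using split by (simp add: sum.distrib)
      also have "(\<Sum>m\<in>{0..<n}. (if m = k then E1 $$ (k, j) else 0)) = E1 $$ (k, j)" using k by simp
      finally show ?thesis using True by simp
    qed
    finally show "(N * E1) $$ (i, j) = 0\<^sub>m n n $$ (i, j)" using i j by simp
  qed (use cE1 in \<open>auto simp: N_def\<close>)
  have NN: "N * N = 0\<^sub>m n n"
  proof (rule eq_matI)
    fix i j assume "i < dim_row (0\<^sub>m n n :: 'a mat)" "j < dim_col (0\<^sub>m n n :: 'a mat)"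
    then have i: "i < n" and j: "j < n" by auto
    have "(N * N) $$ (i, j) = (\<Sum>m\<in>{0..<n}. N $$ (i, m) * N $$ (m, j))" by (rule mult_entry[OF cN cN i j])
    also have "\<dots> = 0" using Ni i j by (intro sum.neutral) auto
    finally show "(N * N) $$ (i, j) = 0\<^sub>m n n $$ (i, j)" using i j by simp
  qed (auto simp: N_def)
  define K where "K = 1\<^sub>m n + N"
  define Ki where "Ki = 1\<^sub>m n - N"
  have cK: "K \<in> carrier_mat n n" and cKi: "Ki \<in> carrier_mat n n" using cN by (auto simp: K_def Ki_def minus_carrier_mat)
  have KKi: "K * Ki = 1\<^sub>m n" unfolding K_def Ki_def using cN NN
    apply (simp add: add_mult_distrib_mat[of _ n n _ _ n] mult_minus_distrib_mat[of _ n n _ n] minus_carrier_mat)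
    apply (intro eq_matI)
    apply auto
    done
  have KiK: "Ki * K = 1\<^sub>m n" unfolding K_def Ki_def using cN NN
    apply (simp add: minus_mult_distrib_mat[of _ n n _ _ n] mult_add_distrib_mat[of _ n n _ n])
    apply (intro eq_matI)
    apply auto
    done
  have KE1: "K * E1 = E1" unfolding K_def using cN cE1 NE1
    by (simp add: add_mult_distrib_mat[of _ n n _ _ n])
  define E' where "E' = K * E1 * Ki"
  have cE': "E' \<in> carrier_mat n n" using cK cE1 cKi by (simp add: E'_def)
  have E'eq: "E' = E1 - E1 * N" unfolding E'_def KE1 Ki_def using cE1 cN
    by (simp add: mult_minus_distrib_mat[of _ n n _ n])
  have E'i: "\<And>i j. i < n \<Longrightarrow> j < n \<Longrightarrow> E' $$ (i, j) = E1 $$ (i, j) - E1 $$ (i, k) * N $$ (k, j)"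
  proof -
    fix i j assume i: "i < n" and j: "j < n"
    have "(E1 * N) $$ (i, j) = (\<Sum>m\<in>{0..<n}. E1 $$ (i, m) * N $$ (m, j))" by (rule mult_entry[OF cE1 cN i j])
    also have "\<dots> = E1 $$ (i, k) * N $$ (k, j)" by (rule sum_single[OF k]) (use Ni j in auto)
    finally show "E' $$ (i, j) = E1 $$ (i, j) - E1 $$ (i, k) * N $$ (k, j)"
      unfolding E'eq using i j cE1 cN by simp
  qed
  have iE': "idk n (Suc k) E'"
    unfolding idk_def
  proof (intro allI impI)
    fix i j assume i: "i < n" and j: "j < n" and ij: "i < Suc k \<or> j < Suc k"
    show "E' $$ (i, j) = (if i = j then 1 else 0)"
    proof (cases "i = k")
      case True
      show ?thesis
      proof (cases "k < j")
        case True
        then show ?thesis using E'i[OF i j] Ni[OF k j] colk[OF k] \<open>i = k\<close> by simp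
      next
        case False
        then have "j < k \<or> j = k" by auto
        then show ?thesis using E'i[OF i j] Ni[OF k j] colk[OF k] \<open>i = k\<close> iE1 i j unfolding idk_def by auto
      qed
    next
      case False
      then have "E' $$ (i, j) = E1 $$ (i, j)" using E'i[OF i j] colk[OF i] by simp
      moreover have "i < k \<or> j < k \<or> j = k" using ij False by auto
      ultimately show ?thesis using iE1 colk[OF i] i j unfolding idk_def by auto
    qed
  qed
  have E'E': "E' * E' = E'"
  proof -
    have "E' * E' = K * (E1 * (Ki * K) * E1) * Ki" unfolding E'_def using cK cE1 cKi by simp
    also have "\<dots> = E'" unfolding KiK E'_def using E1E1 cE1 cK cKi by simp
    finally show ?thesis .
  qed
  show ?thesis
  proof (rule exI[of _ "H * Ki"], rule exI[of _ "K * G"], rule exI[of _ E'], intro conjI)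
    show "H * Ki \<in> carrier_mat n n" "K * G \<in> carrier_mat n n" "E' \<in> carrier_mat n n"
      using H cKi cK G cE' by auto
    show "H * Ki * (K * G) = 1\<^sub>m n"
    proof -
      have "H * Ki * (K * G) = H * (Ki * K) * G" using H cKi cK G by simp
      thus ?thesis unfolding KiK using HG H by simp
    qed
    show "K * G * (H * Ki) = 1\<^sub>m n"
    proof -
      have "K * G * (H * Ki) = K * (G * H) * Ki" using H cKi cK G by simp
      thus ?thesis unfolding GH using KKi cK by simp
    qed
    show "E = H * Ki * E' * (K * G)"
    proof -
      have "H * Ki * E' * (K * G) = H * ((Ki * K) * E1 * (Ki * K)) * G" unfolding E'_def
        using H cKi cK G cE1 by simp
      also have "\<dots> = (H * G) * E * (H * G)" unfolding KiK E1_def using H G E by simp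
      also have "\<dots> = E" unfolding HG using E by simp
      finally show ?thesis by simp
    qed
    show "E' * E' = E'" by (rule E'E')
    show "idk n (Suc k) E'" by (rule iE')
  qed
qed

lemma diag:
  fixes E :: "'a::idom mat"
  assumes bz: "bezout_domain TYPE('a)" and E: "E \<in> carrier_mat n n" and EE: "E * E = E"
  shows "\<exists>r S T. r \<le> n \<and> S \<in> carrier_mat n n \<and> T \<in> carrier_mat n n \<and> S * T = 1\<^sub>m n \<and> T * S = 1\<^sub>m n \<and>
    E = S * Dm n r * T"
proof -
  note ms[simp] = assoc_mult_mat[of _ n n _ n _ n] mult_carrier_mat[of _ n n _ n]
  have main: "\<forall>k (E::'a mat). n - k = d \<longrightarrow> k \<le> n \<longrightarrow> E \<in> carrier_mat n n \<longrightarrow> E * E = E \<longrightarrow> idk n k E \<longrightarrow>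
    (\<exists>r S T. r \<le> n \<and> S \<in> carrier_mat n n \<and> T \<in> carrier_mat n n \<and> S * T = 1\<^sub>m n \<and> T * S = 1\<^sub>m n \<and>
    E = S * Dm n r * T)" for d
  proof (induction d)
    case 0
    show ?case
    proof (intro allI impI)
      fix k and E :: "'a mat" assume "n - k = 0" "k \<le> n" and E: "E \<in> carrier_mat n n" and "E * E = E" and iE: "idk n k E"
      then have kn: "k = n" by simp
      have "E = Dm n k" by (rule diag_zero[OF E iE]) (use kn in auto)
      then show "\<exists>r S T. r \<le> n \<and> S \<in> carrier_mat n n \<and> T \<in> carrier_mat n n \<and> S * T = 1\<^sub>m n \<and> T * S = 1\<^sub>m n \<and>
        E = S * Dm n r * T" using kn by (intro exI[of _ k] exI[of _ "1\<^sub>m n"]) auto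
    qed
  next
    case (Suc d)
    show ?case
    proof (intro allI impI)
      fix k and E :: "'a mat" assume d: "n - k = Suc d" and "k \<le> n" and E: "E \<in> carrier_mat n n" and EE: "E * E = E" and iE: "idk n k E"
      then have k: "k < n" by simp
      show "\<exists>r S T. r \<le> n \<and> S \<in> carrier_mat n n \<and> T \<in> carrier_mat n n \<and> S * T = 1\<^sub>m n \<and> T * S = 1\<^sub>m n \<and>
        E = S * Dm n r * T"
      proof (cases "\<forall>i j. k \<le> i \<and> i < n \<and> k \<le> j \<and> j < n \<longrightarrow> E $$ (i, j) = 0")
        case True
        then have "E = Dm n k" by (rule diag_zero[OF E iE])
        then show ?thesis using k by (intro exI[of _ k] exI[of _ "1\<^sub>m n"]) auto
      next
        case False
        then obtain i0 j0 where "k \<le> i0" "i0 < n" "k \<le> j0" "j0 < n" "E $$ (i0, j0) \<noteq> 0" by blast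
        then obtain S T E' where S: "S \<in> carrier_mat n n" and T: "T \<in> carrier_mat n n" and cE': "E' \<in> carrier_mat n n"
          and ST: "S * T = 1\<^sub>m n" and TS: "T * S = 1\<^sub>m n" and EE': "E = S * E' * T" and E'E': "E' * E' = E'"
          and iE': "idk n (Suc k) E'"
          using diag_step[OF bz E EE iE k] by metis
        have dd: "n - Suc k = d" using d by simp
        have "\<exists>r S T. r \<le> n \<and> S \<in> carrier_mat n n \<and> T \<in> carrier_mat n n \<and> S * T = 1\<^sub>m n \<and> T * S = 1\<^sub>m n \<and>
          E' = S * Dm n r * T"
          by (rule Suc.IH[rule_format, OF dd _ cE' E'E' iE']) (use k in simp)
        then obtain r S' T' where r: "r \<le> n" and S': "S' \<in> carrier_mat n n" and T': "T' \<in> carrier_mat n n"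
          and ST': "S' * T' = 1\<^sub>m n" and TS': "T' * S' = 1\<^sub>m n" and E': "E' = S' * Dm n r * T'" by blast
        show ?thesis
        proof (rule exI[of _ r], rule exI[of _ "S * S'"], rule exI[of _ "T' * T"], intro conjI)
          show "r \<le> n" by (rule r)
          show "S * S' \<in> carrier_mat n n" "T' * T \<in> carrier_mat n n" using S S' T T' by auto
          show "S * S' * (T' * T) = 1\<^sub>m n"
          proof -
            have "S * S' * (T' * T) = S * (S' * T') * T" using S S' T T' by simp
            thus ?thesis unfolding ST' using ST S by simp
          qed
          show "T' * T * (S * S') = 1\<^sub>m n"
          proof -
            have "T' * T * (S * S') = T' * (T * S) * S'" using S S' T T' by simp
            thus ?thesis unfolding TS using TS' T' by simp
          qed
          show "E = S * S' * Dm n r * (T' * T)" unfolding EE' E' using S S' T T' by simp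
        qed
      qed
    qed
  qed
  have i0: "idk n 0 E" unfolding idk_def by simp
  show ?thesis by (rule main[rule_format, of 0 n E, OF _ _ E EE i0]) simp_all
qed


definition Dp :: "nat \<Rightarrow> (nat \<Rightarrow> bool) \<Rightarrow> 'a::zero_neq_one mat" where
  "Dp n p = mat n n (\<lambda>(i, j). if i = j \<and> p i then 1 else 0)"

lemma Dp_carrier[simp]: "Dp n p \<in> carrier_mat n n" unfolding Dp_def by simp

lemma Dp_dims[simp]: "dim_row (Dp n p) = n" "dim_col (Dp n p) = n" unfolding Dp_def by auto

lemma Dp_index: "i < n \<Longrightarrow> j < n \<Longrightarrow> Dp n p $$ (i, j) = (if i = j \<and> p i then 1 else 0)"
  unfolding Dp_def by simp

lemma Dm_Dp: "Dm n r = Dp n (\<lambda>i. i < r)" unfolding Dm_def Dp_def by simp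

lemma Dp_left: fixes X :: "'a::comm_ring_1 mat"
  assumes X: "X \<in> carrier_mat n n" and i: "i < n" and j: "j < n"
  shows "(Dp n p * X) $$ (i, j) = (if p i then X $$ (i, j) else 0)"
proof -
  have "(Dp n p * X) $$ (i, j) = (\<Sum>m\<in>{0..<n}. Dp n p $$ (i, m) * X $$ (m, j))" by (rule mult_entry[OF Dp_carrier X i j])
  also have "\<dots> = Dp n p $$ (i, i) * X $$ (i, j)" by (rule sum_single[OF i]) (simp add: Dp_index i)
  finally show ?thesis using i by (simp add: Dp_index)
qed

lemma Dp_right: fixes X :: "'a::comm_ring_1 mat"
  assumes X: "X \<in> carrier_mat n n" and i: "i < n" and j: "j < n"
  shows "(X * Dp n p) $$ (i, j) = (if p j then X $$ (i, j) else 0)"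
proof -
  have "(X * Dp n p) $$ (i, j) = (\<Sum>m\<in>{0..<n}. X $$ (i, m) * Dp n p $$ (m, j))" by (rule mult_entry[OF X Dp_carrier i j])
  also have "\<dots> = X $$ (i, j) * Dp n p $$ (j, j)" by (rule sum_single[OF j]) (simp add: Dp_index j)
  finally show ?thesis using j by (simp add: Dp_index)
qed

lemma rank_lt:
  fixes U V :: "'a::idom mat"
  assumes rs: "r < s" and sn: "s \<le> n" and U: "U \<in> carrier_mat n n" and V: "V \<in> carrier_mat n n"
    and UV: "U * V = Dm n r" and VU: "V * U = Dm n s"
    and UD: "U = Dm n r * U * Dm n s" and VD: "V = Dm n s * V * Dm n r"
  shows False
proof -
  note ms[simp] = assoc_mult_mat[of _ n n _ n _ n] mult_carrier_mat[of _ n n _ n]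
  have Uz: "\<And>i j. i < n \<Longrightarrow> j < n \<Longrightarrow> r \<le> i \<or> s \<le> j \<Longrightarrow> U $$ (i, j) = 0"
  proof -
    fix i j assume i: "i < n" and j: "j < n" and c: "r \<le> i \<or> s \<le> j"
    have "U $$ (i, j) = (Dp n (\<lambda>i. i < r) * (U * Dp n (\<lambda>i. i < s))) $$ (i, j)"
      using UD U unfolding Dm_Dp by simp
    also have "\<dots> = (if i < r then (U * Dp n (\<lambda>i. i < s)) $$ (i, j) else 0)"
      by (rule Dp_left[OF _ i j]) (use U in simp)
    also have "\<dots> = (if i < r then (if j < s then U $$ (i, j) else 0) else 0)" using Dp_right[OF U i j] by simp
    also have "\<dots> = 0" using c by auto
    finally show "U $$ (i, j) = 0" .
  qed
  have Vz: "\<And>i j. i < n \<Longrightarrow> j < n \<Longrightarrow> s \<le> i \<or> r \<le> j \<Longrightarrow> V $$ (i, j) = 0"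
  proof -
    fix i j assume i: "i < n" and j: "j < n" and c: "s \<le> i \<or> r \<le> j"
    have "V $$ (i, j) = (Dp n (\<lambda>i. i < s) * (V * Dp n (\<lambda>i. i < r))) $$ (i, j)"
      using VD V unfolding Dm_Dp by simp
    also have "\<dots> = (if i < s then (V * Dp n (\<lambda>i. i < r)) $$ (i, j) else 0)"
      by (rule Dp_left[OF _ i j]) (use V in simp)
    also have "\<dots> = (if i < s then (if j < r then V $$ (i, j) else 0) else 0)" using Dp_right[OF V i j] by simp
    also have "\<dots> = 0" using c by auto
    finally show "V $$ (i, j) = 0" .
  qed
  define Dc :: "'a mat" where "Dc = Dp n (\<lambda>i. s \<le> i)"
  have cDc: "Dc \<in> carrier_mat n n" by (simp add: Dc_def)
  have VDc: "V * Dc = 0\<^sub>m n n"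
  proof (rule eq_matI)
    fix i j assume "i < dim_row (0\<^sub>m n n :: 'a mat)" "j < dim_col (0\<^sub>m n n :: 'a mat)"
    then have i: "i < n" and j: "j < n" by auto
    have "(V * Dc) $$ (i, j) = (if s \<le> j then V $$ (i, j) else 0)" unfolding Dc_def by (rule Dp_right[OF V i j])
    then show "(V * Dc) $$ (i, j) = 0\<^sub>m n n $$ (i, j)" using Vz[OF i j] rs i j by auto
  qed (use V in \<open>auto simp: Dc_def\<close>)
  have DcU: "Dc * U = 0\<^sub>m n n"
  proof (rule eq_matI)
    fix i j assume "i < dim_row (0\<^sub>m n n :: 'a mat)" "j < dim_col (0\<^sub>m n n :: 'a mat)"
    then have i: "i < n" and j: "j < n" by auto
    have "(Dc * U) $$ (i, j) = (if s \<le> i then U $$ (i, j) else 0)" unfolding Dc_def by (rule Dp_left[OF U i j])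
    then show "(Dc * U) $$ (i, j) = 0\<^sub>m n n $$ (i, j)" using Uz[OF i j] rs i j by auto
  qed (use U in \<open>auto simp: Dc_def\<close>)
  have DcDc: "Dc * Dc = Dc"
  proof (rule eq_matI)
    fix i j assume "i < dim_row Dc" "j < dim_col Dc"
    then have i: "i < n" and j: "j < n" by (auto simp: Dc_def)
    have "(Dc * Dc) $$ (i, j) = (if s \<le> i then Dc $$ (i, j) else 0)" unfolding Dc_def by (rule Dp_left[OF Dp_carrier i j])
    then show "(Dc * Dc) $$ (i, j) = Dc $$ (i, j)" using i j by (auto simp: Dc_def Dp_index)
  qed (auto simp: Dc_def)
  define V2 where "V2 = V + Dc"
  define U2 where "U2 = U + Dc"
  have cV2: "V2 \<in> carrier_mat n n" and cU2: "U2 \<in> carrier_mat n n" using U V cDc by (auto simp: U2_def V2_def)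
  have prod: "V2 * U2 = 1\<^sub>m n"
    unfolding V2_def U2_def using U V cDc VDc DcU DcDc VU
    apply (simp add: add_mult_distrib_mat[of _ n n _ _ n] mult_add_distrib_mat[of _ n n _ n])
    apply (intro eq_matI)
    apply (auto simp: Dc_def Dp_index Dm_index)
    done
  have rn: "r < n" using rs sn by simp
  have U2r: "U2 = mat\<^sub>r n n (\<lambda>i. if i = r then 0\<^sub>v n else row U2 i)"
  proof (rule eq_matI)
    fix i j assume "i < dim_row (mat\<^sub>r n n (\<lambda>i. if i = r then 0\<^sub>v n else row U2 i))"
      "j < dim_col (mat\<^sub>r n n (\<lambda>i. if i = r then 0\<^sub>v n else row U2 i))"
    then have i: "i < n" and j: "j < n" by auto
    show "U2 $$ (i, j) = mat\<^sub>r n n (\<lambda>i. if i = r then 0\<^sub>v n else row U2 i) $$ (i, j)"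
    proof (cases "i = r")
      case True
      then show ?thesis using i j Uz[of r j] rs U cDc unfolding U2_def by (simp add: Dc_def Dp_index)
    next
      case False
      then show ?thesis using i j cU2 by simp
    qed
  qed (use cU2 in auto)
  have "det U2 = 0"
    by (subst U2r, rule det_row_0[OF rn]) (use cU2 in auto)
  moreover have "det (V2 * U2) = det V2 * det U2" by (rule det_mult[OF cV2 cU2])
  ultimately have "det (V2 * U2) = 0" by simp
  then show False unfolding prod by simp
qed

lemma rank_eq:
  fixes U V :: "'a::idom mat"
  assumes rn: "r \<le> n" and sn: "s \<le> n" and U: "U \<in> carrier_mat n n" and V: "V \<in> carrier_mat n n"
    and UV: "U * V = Dm n r" and VU: "V * U = Dm n s"
    and UD: "U = Dm n r * U * Dm n s" and VD: "V = Dm n s * V * Dm n r"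
  shows "r = s"
proof (rule ccontr)
  assume "r \<noteq> s"
  then consider "r < s" | "s < r" by linarith
  then show False
  proof cases
    case 1
    show False by (rule rank_lt[OF 1 sn U V UV VU UD VD])
  next
    case 2
    show False by (rule rank_lt[OF 2 rn V U VU UV VD UD])
  qed
qed

lemma idem_sim:
  fixes P Q U V :: "'a::idom mat"
  assumes bz: "bezout_domain TYPE('a)"
    and cP: "P \<in> carrier_mat n n" and cQ: "Q \<in> carrier_mat n n" and cU: "U \<in> carrier_mat n n" and cV: "V \<in> carrier_mat n n"
    and PP: "P * P = P" and QQ: "Q * Q = Q" and UV: "U * V = P" and VU: "V * U = Q"
    and PU: "P * U = U" and UQ: "U * Q = U" and QV: "Q * V = V" and VP: "V * P = V"
  shows "\<exists>S Si. S \<in> carrier_mat n n \<and> Si \<in> carrier_mat n n \<and> S * Si = 1\<^sub>m n \<and> Si * S = 1\<^sub>m n \<and> P * S = S * Q"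
proof -
  note ms[simp] = assoc_mult_mat[of _ n n _ n _ n] mult_carrier_mat[of _ n n _ n]
  obtain r S1 T1 where r: "r \<le> n" and S1: "S1 \<in> carrier_mat n n" and T1: "T1 \<in> carrier_mat n n"
    and ST1: "S1 * T1 = 1\<^sub>m n" and TS1: "T1 * S1 = 1\<^sub>m n" and P: "P = S1 * Dm n r * T1"
    using diag[OF bz cP PP] by blast
  obtain s S2 T2 where s: "s \<le> n" and S2: "S2 \<in> carrier_mat n n" and T2: "T2 \<in> carrier_mat n n"
    and ST2: "S2 * T2 = 1\<^sub>m n" and TS2: "T2 * S2 = 1\<^sub>m n" and Q: "Q = S2 * Dm n s * T2"
    using diag[OF bz cQ QQ] by blast
  have Dr: "T1 * P * S1 = Dm n r"
  proof -
    have "T1 * P * S1 = (T1 * S1) * Dm n r * (T1 * S1)" unfolding P using S1 T1 by simp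
    thus ?thesis unfolding TS1 by simp
  qed
  have Ds: "T2 * Q * S2 = Dm n s"
  proof -
    have "T2 * Q * S2 = (T2 * S2) * Dm n s * (T2 * S2)" unfolding Q using S2 T2 by simp
    thus ?thesis unfolding TS2 by simp
  qed
  define U' where "U' = T1 * U * S2"
  define V' where "V' = T2 * V * S1"
  have cU': "U' \<in> carrier_mat n n" and cV': "V' \<in> carrier_mat n n" using T1 cU S2 T2 cV S1 by (auto simp: U'_def V'_def)
  have UV': "U' * V' = Dm n r"
  proof -
    have "U' * V' = T1 * (U * (S2 * T2) * V) * S1" unfolding U'_def V'_def using T1 cU S2 T2 cV S1 by simp
    also have "\<dots> = T1 * P * S1" unfolding ST2 UV[symmetric] using cU cV by simp
    finally show ?thesis using Dr by simp
  qed
  have VU': "V' * U' = Dm n s"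
  proof -
    have "V' * U' = T2 * (V * (S1 * T1) * U) * S2" unfolding U'_def V'_def using T1 cU S2 T2 cV S1 by simp
    also have "\<dots> = T2 * Q * S2" unfolding ST1 VU[symmetric] using cU cV by simp
    finally show ?thesis using Ds by simp
  qed
  have UD': "U' = Dm n r * U' * Dm n s"
  proof -
    have "Dm n r * U' * Dm n s = T1 * P * (S1 * T1) * U * (S2 * T2) * Q * S2"
      unfolding Dr[symmetric] Ds[symmetric] U'_def using T1 cU S2 T2 S1 cP cQ by simp
    also have "\<dots> = T1 * ((P * U) * Q) * S2" unfolding ST1 ST2 using T1 cU S2 cP cQ by simp
    also have "\<dots> = U'" unfolding PU UQ U'_def using T1 cU S2 by simp
    finally show ?thesis by simp
  qed
  have VD': "V' = Dm n s * V' * Dm n r"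
  proof -
    have "Dm n s * V' * Dm n r = T2 * Q * (S2 * T2) * V * (S1 * T1) * P * S1"
      unfolding Dr[symmetric] Ds[symmetric] V'_def using T1 cV S2 T2 S1 cP cQ by simp
    also have "\<dots> = T2 * ((Q * V) * P) * S1" unfolding ST1 ST2 using T2 cV S1 cP cQ by simp
    also have "\<dots> = V'" unfolding QV VP V'_def using T2 cV S1 by simp
    finally show ?thesis by simp
  qed
  have rs: "r = s" by (rule rank_eq[OF r s cU' cV' UV' VU' UD' VD'])
  show ?thesis
  proof (rule exI[of _ "S1 * T2"], rule exI[of _ "S2 * T1"], intro conjI)
    show "S1 * T2 \<in> carrier_mat n n" "S2 * T1 \<in> carrier_mat n n" using S1 T2 S2 T1 by auto
    show "S1 * T2 * (S2 * T1) = 1\<^sub>m n"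
    proof -
      have "S1 * T2 * (S2 * T1) = S1 * (T2 * S2) * T1" using S1 T2 S2 T1 by simp
      thus ?thesis unfolding TS2 using ST1 S1 by simp
    qed
    show "S2 * T1 * (S1 * T2) = 1\<^sub>m n"
    proof -
      have "S2 * T1 * (S1 * T2) = S2 * (T1 * S1) * T2" using S1 T2 S2 T1 by simp
      thus ?thesis unfolding TS1 using ST2 S2 by simp
    qed
    show "P * (S1 * T2) = S1 * T2 * Q"
    proof -
      have "P * (S1 * T2) = S1 * Dm n r * (T1 * S1) * T2" unfolding P using S1 T1 T2 by simp
      also have "\<dots> = S1 * Dm n r * T2" unfolding TS1 using S1 T2 by simp
      also have "\<dots> = S1 * (T2 * S2) * Dm n s * T2" unfolding TS2 rs using S1 T2 by simp
      also have "\<dots> = S1 * T2 * Q" unfolding Q using S1 T2 S2 by simp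
      finally show ?thesis .
    qed
  qed
qed


lemma mctx: assumes "A * B = C" "A \<in> carrier_mat n n" "B \<in> carrier_mat n n" "Z \<in> carrier_mat n m"
  shows "A * (B * Z) = C * Z"
  using assms by (metis assoc_mult_mat)

lemma minus_zero_mat_right[simp]: "(A :: 'a :: group_add mat) \<in> carrier_mat nr nc \<Longrightarrow> A - 0\<^sub>m nr nc = A"
  by (intro eq_matI) auto

lemma compl_facts:
  fixes Q :: "'a::comm_ring_1 mat"
  assumes Q: "Q \<in> carrier_mat n n" and QQ: "Q * Q = Q"
  shows "Q * (1\<^sub>m n - Q) = 0\<^sub>m n n" "(1\<^sub>m n - Q) * Q = 0\<^sub>m n n"
    "(1\<^sub>m n - Q) * (1\<^sub>m n - Q) = 1\<^sub>m n - Q" "1\<^sub>m n - Q \<in> carrier_mat n n"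
proof -
  note ms[simp] = assoc_mult_mat[of _ n n _ n _ n] mult_carrier_mat[of _ n n _ n]
    minus_mult_distrib_mat[of _ n n _ _ n] mult_minus_distrib_mat[of _ n n _ n]
  show c: "1\<^sub>m n - Q \<in> carrier_mat n n" using Q by (simp add: minus_carrier_mat)
  show 1: "Q * (1\<^sub>m n - Q) = 0\<^sub>m n n" using Q QQ by (simp add: mult_minus_distrib_mat)
  show 2: "(1\<^sub>m n - Q) * Q = 0\<^sub>m n n" using Q QQ by (simp add: minus_mult_distrib_mat[of _ n n _ _ n])
  show "(1\<^sub>m n - Q) * (1\<^sub>m n - Q) = 1\<^sub>m n - Q"
    using Q c 2 by (simp add: minus_mult_distrib_mat[of _ n n _ _ n])
qed

lemma main_sim:
  fixes A B C X Y :: "'a::idom mat"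
  assumes bz: "bezout_domain TYPE('a)" and cA: "A \<in> carrier_mat n n" and cB: "B \<in> carrier_mat n n" and cC: "C \<in> carrier_mat n n"
    and cX: "X \<in> carrier_mat n n" and cY: "Y \<in> carrier_mat n n"
    and h: "A * B * A = A * C * A"
    and X1: "A * B * X = X * (A * B)" and X2: "X * (A * B) * X = X" and X3: "A * B * (A * B) * X = A * B"
    and Y1: "C * A * Y = Y * (C * A)" and Y2: "Y * (C * A) * Y = Y" and Y3: "C * A * (C * A) * Y = C * A"
  shows "similar_mat (A * B) (C * A)"
proof -
  note ms[simp] = assoc_mult_mat[of _ n n _ n _ n] mult_carrier_mat[of _ n n _ n]
  define M where "M = A * B"
  define N where "N = C * A"
  have cM: "M \<in> carrier_mat n n" and cN: "N \<in> carrier_mat n n" using cA cB cC by (auto simp: M_def N_def)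
  have XM: "M * X = X * M" and XMX: "X * (M * X) = X" and MMX: "M * (M * X) = M"
    using X1 X2 X3 cM cX unfolding M_def[symmetric] by auto
  have YN: "N * Y = Y * N" and YNY: "Y * (N * Y) = Y" and NNY: "N * (N * Y) = N"
    using Y1 Y2 Y3 cN cY unfolding N_def[symmetric] by auto
  have f1: "M * A = A * N" using h cA cB cC unfolding M_def N_def by simp
  have f1c: "\<And>Z m. Z \<in> carrier_mat n m \<Longrightarrow> M * (A * Z) = A * (N * Z)"
    using mctx[OF f1 cM cA] cA cN by simp
  have MM: "M * M = A * (N * B)" using f1c[OF cB] unfolding M_def[symmetric] by simp
  define P where "P = M * X"
  define Q where "Q = N * Y"
  have cP: "P \<in> carrier_mat n n" and cQ: "Q \<in> carrier_mat n n" using cM cX cN cY by (auto simp: P_def Q_def)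
  have MXM: "M * (X * M) = M"
  proof -
    have "M * (X * M) = M * (M * X)" using XM by simp
    thus ?thesis using MMX by simp
  qed
  have NYN: "N * (Y * N) = N"
  proof -
    have "N * (Y * N) = N * (N * Y)" using YN by simp
    thus ?thesis using NNY by simp
  qed
  have PP: "P * P = P" unfolding P_def using XMX cM cX by simp
  have QQ: "Q * Q = Q" unfolding Q_def using YNY cN cY by simp
  have QN: "Q * N = N" unfolding Q_def using NYN cN cY by simp
  have NQ: "N * Q = N" unfolding Q_def using NNY cN cY by simp
  have QY: "Q * Y = Y"
  proof -
    have "Q * Y = N * Y * Y" unfolding Q_def ..
    also have "\<dots> = Y * N * Y" using YN by simp
    also have "\<dots> = Y" using YNY cN cY by simp
    finally show ?thesis .
  qed
  have YNN: "Y * (N * N) = N"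
  proof -
    have "Y * (N * N) = Y * N * N" using cN cY by simp
    also have "\<dots> = N * Y * N" using YN by simp
    also have "\<dots> = N" using NYN cN cY by simp
    finally show ?thesis .
  qed
  define R where "R = B * (X * X)"
  have cR: "R \<in> carrier_mat n n" using cB cX by (simp add: R_def)
  have P_eq: "P = A * (N * R)"
  proof -
    have "P = P * P" using PP by simp
    also have "\<dots> = M * X * M * X" unfolding P_def using cM cX by simp
    also have "\<dots> = M * (X * M) * X" using cM cX by simp
    also have "\<dots> = M * (M * X) * X" using XM by simp
    also have "\<dots> = M * M * X * X" using cM cX by simp
    also have "\<dots> = A * (N * R)" using MM cA cN cB cX unfolding R_def by simp
    finally show ?thesis .
  qed
  define V where "V = Y * (C * P)"
  define U where "U = A * Q"
  have cU: "U \<in> carrier_mat n n" and cV: "V \<in> carrier_mat n n"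
    using cA cQ cY cC cP by (auto simp: U_def V_def)
  have V_eq: "V = N * R"
  proof -
    have "V = Y * ((C * A) * (N * R))" unfolding V_def P_eq using cY cC cA cN cR by simp
    also have "\<dots> = Y * (N * N) * R" unfolding N_def[symmetric] using cY cN cR by simp
    also have "\<dots> = N * R" using YNN by simp
    finally show ?thesis .
  qed
  have UV: "U * V = P"
  proof -
    have "U * V = A * (Q * N) * R" unfolding U_def V_eq using cA cQ cN cR by simp
    also have "\<dots> = P" using QN P_eq cA cN cR by simp
    finally show ?thesis .
  qed
  have PAN: "P * (A * N) = A * N"
  proof -
    have "P * (A * N) = M * (X * (M * A))" unfolding P_def using f1 cM cX cA cN by simp
    also have "\<dots> = M * (X * M) * A" using cM cX cA by simp
    also have "\<dots> = M * A" using MXM by simp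
    finally show ?thesis using f1 by simp
  qed
  have PU: "P * U = U"
  proof -
    have "P * U = P * (A * N) * Y" unfolding U_def Q_def using cP cA cN cY by simp
    also have "\<dots> = U" using PAN cA cN cY unfolding U_def Q_def by simp
    finally show ?thesis .
  qed
  have VU: "V * U = Q"
  proof -
    have "V * U = Y * (C * (P * U))" unfolding V_def using cY cC cP cU by simp
    also have "\<dots> = Y * (C * A) * Q" using PU cY cC cA cQ unfolding U_def by simp
    also have "\<dots> = Q * Q" unfolding N_def[symmetric] Q_def using YN by simp
    finally show ?thesis using QQ by simp
  qed
  have UQ: "U * Q = U" unfolding U_def using QQ cA cQ by simp
  have QV: "Q * V = V"
  proof -
    have "Q * V = Q * N * R" unfolding V_eq using cQ cN cR by simp
    thus ?thesis using QN V_eq by simp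
  qed
  have VP: "V * P = V" unfolding V_def using PP cY cC cP by simp
  have UN: "U * N = M * U"
  proof -
    have "U * N = A * N" unfolding U_def using QN cA cQ cN by simp
    moreover have "M * U = A * N" unfolding U_def using f1c[OF cQ] NQ by simp
    ultimately show ?thesis by simp
  qed
  obtain S Si where cS: "S \<in> carrier_mat n n" and cSi: "Si \<in> carrier_mat n n"
    and SSi: "S * Si = 1\<^sub>m n" and SiS: "Si * S = 1\<^sub>m n" and PS: "P * S = S * Q"
    using idem_sim[OF bz cP cQ cU cV PP QQ UV VU PU UQ QV VP] by blast
  define Q' where "Q' = 1\<^sub>m n - Q"
  have cQ': "Q' \<in> carrier_mat n n" and QQ': "Q * Q' = 0\<^sub>m n n" and Q'Q: "Q' * Q = 0\<^sub>m n n"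
    and Q'Q': "Q' * Q' = Q'" using compl_facts[OF cQ QQ] unfolding Q'_def by auto
  have Q'Y: "Q' * Y = 0\<^sub>m n n" unfolding Q'_def using cQ cY QY by (simp add: minus_mult_distrib_mat[of _ n n _ _ n])
  have Q'N: "Q' * N = 0\<^sub>m n n" unfolding Q'_def using cQ cN QN by (simp add: minus_mult_distrib_mat[of _ n n _ _ n])
  have SiP: "Si * P = Q * Si"
  proof -
    have "Si * P = Si * P * (S * Si)" using SSi cSi cP by simp
    also have "\<dots> = Si * (P * S) * Si" using cSi cP cS by simp
    also have "\<dots> = (Si * S) * Q * Si" unfolding PS using cSi cS cQ by simp
    finally show ?thesis using SiS cQ cSi by simp
  qed
  define U2 where "U2 = S * Q'"
  define V2 where "V2 = Q' * Si"
  have cU2: "U2 \<in> carrier_mat n n" and cV2: "V2 \<in> carrier_mat n n" using cS cQ' cSi by (auto simp: U2_def V2_def)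
  have a1: "U * V2 = 0\<^sub>m n n"
  proof -
    have "U * V2 = A * (Q * Q') * Si" unfolding U_def V2_def using cA cQ cQ' cSi by simp
    thus ?thesis using QQ' cA cSi by simp
  qed
  have a2: "U2 * V = 0\<^sub>m n n"
  proof -
    have "U2 * V = S * (Q' * Y) * (C * P)" unfolding U2_def V_def using cS cQ' cY cC cP by simp
    thus ?thesis using Q'Y cS cC cP by simp
  qed
  have a3: "U2 * V2 = 1\<^sub>m n - P"
  proof -
    have "U2 * V2 = S * (Q' * Q') * Si" unfolding U2_def V2_def using cS cQ' cSi by simp
    also have "\<dots> = S * Q' * Si" using Q'Q' by simp
    also have "\<dots> = S * Si - S * Q * Si" unfolding Q'_def using cS cQ cSi
      by (simp add: mult_minus_distrib_mat[of _ n n _ n] minus_mult_distrib_mat[of _ n n _ _ n])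
    also have "\<dots> = 1\<^sub>m n - P * S * Si" using PS SSi cS cSi cQ cP by simp
    also have "\<dots> = 1\<^sub>m n - P" using SSi cP cS cSi by simp
    finally show ?thesis .
  qed
  have b1: "V * U2 = 0\<^sub>m n n"
  proof -
    have "V * U2 = Y * (C * (P * S)) * Q'" unfolding V_def U2_def using cY cC cP cS cQ' by simp
    also have "\<dots> = Y * (C * S) * (Q * Q')" unfolding PS using cY cC cS cQ cQ' by simp
    finally show ?thesis using QQ' cY cC cS by simp
  qed
  have b2: "V2 * U = 0\<^sub>m n n"
  proof -
    have "V2 * U = Q' * (Si * (P * U))" unfolding V2_def PU using cQ' cSi cU by simp
    also have "\<dots> = Q' * (Si * P) * U" using cQ' cSi cP cU by simp
    also have "\<dots> = Q' * (Q * Si) * U" using SiP by simp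
    also have "\<dots> = (Q' * Q) * (Si * U)" using cQ' cSi cQ cU by simp
    finally show ?thesis using Q'Q cSi cU by simp
  qed
  have b3: "V2 * U2 = Q'"
  proof -
    have "V2 * U2 = Q' * (Si * S) * Q'" unfolding V2_def U2_def using cS cQ' cSi by simp
    thus ?thesis using SiS Q'Q' cQ' by simp
  qed
  define T where "T = U + U2"
  define Ti where "Ti = V + V2"
  have cT: "T \<in> carrier_mat n n" and cTi: "Ti \<in> carrier_mat n n" using cU cU2 cV cV2 by (auto simp: T_def Ti_def)
  have TTi: "T * Ti = 1\<^sub>m n"
  proof -
    have "T * Ti = U * V + U2 * V + (U * V2 + U2 * V2)" unfolding T_def Ti_def using cU cU2 cV cV2
      by (simp add: add_mult_distrib_mat[of _ n n _ _ n] mult_add_distrib_mat[of _ n n _ n])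
    also have "\<dots> = P + (1\<^sub>m n - P)" unfolding UV a1 a2 a3 using cP by (simp add: minus_carrier_mat)
    also have "\<dots> = 1\<^sub>m n" using cP by (intro eq_matI) auto
    finally show ?thesis .
  qed
  have TiT: "Ti * T = 1\<^sub>m n"
  proof -
    have "Ti * T = V * U + V2 * U + (V * U2 + V2 * U2)" unfolding T_def Ti_def using cU cU2 cV cV2
      by (simp add: add_mult_distrib_mat[of _ n n _ _ n] mult_add_distrib_mat[of _ n n _ n])
    also have "\<dots> = Q + (1\<^sub>m n - Q)" unfolding VU b1 b2 b3 Q'_def using cQ by (simp add: minus_carrier_mat)
    also have "\<dots> = 1\<^sub>m n" using cQ by (intro eq_matI) auto
    finally show ?thesis .
  qed
  have MP: "M * P = M" unfolding P_def using MMX .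
  have MU2: "M * U2 = 0\<^sub>m n n"
  proof -
    have "M * U2 = M * P * S * Q'" unfolding U2_def using MP cM cS cQ' cP by simp
    also have "\<dots> = M * (P * S) * Q'" using cM cP cS cQ' by simp
    also have "\<dots> = M * (S * Q) * Q'" using PS by simp
    also have "\<dots> = M * S * (Q * Q')" using cM cS cQ cQ' by simp
    finally show ?thesis using QQ' cM cS by simp
  qed
  have U2N: "U2 * N = 0\<^sub>m n n" unfolding U2_def using Q'N cS cQ' cN by simp
  have MT: "M * T = T * N"
    unfolding T_def using cM cU cU2 cN UN MU2 U2N
    by (simp add: add_mult_distrib_mat[of _ n n _ _ n] mult_add_distrib_mat[of _ n n _ n])
  have "M = T * N * Ti"
  proof -
    have "M = M * (T * Ti)" using TTi cM by simp
    also have "\<dots> = (M * T) * Ti" using cM cT cTi by simp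
    also have "\<dots> = T * N * Ti" using MT by simp
    finally show ?thesis .
  qed
  thus ?thesis unfolding similar_mat_def similar_mat_wit_def M_def[symmetric] N_def[symmetric]
    using cM cN cT cTi TTi TiT by (intro exI[of _ T] exI[of _ Ti]) (auto simp: Let_def)
qed

lemma drazin_group:
  fixes M X :: "'a::comm_ring_1 mat"
  assumes M: "M \<in> carrier_mat n n" and X: "X \<in> carrier_mat n n" and c: "M * X = X * M"
    and XMX: "X * M * X = X" and g: "M ^\<^sub>m 2 * X = M"
  shows "drazin_inv n M = X"
  unfolding drazin_inv_def
proof (rule the_equality)
  note ms[simp] = assoc_mult_mat[of _ n n _ n _ n] mult_carrier_mat[of _ n n _ n]
  have M2: "M ^\<^sub>m 2 = M * M" using M by (simp add: numeral_2_eq_2)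
  have MMX: "M * (M * X) = M" using g M X unfolding M2 by simp
  have MXM: "M * (X * M) = M"
  proof -
    have "M * (X * M) = M * (M * X)" using c by simp
    thus ?thesis using MMX by simp
  qed
  have XMM: "X * (M * M) = M"
  proof -
    have "X * (M * M) = (X * M) * M" using X M by simp
    also have "\<dots> = M * X * M" using c by simp
    also have "\<dots> = M" using MXM M X by simp
    finally show ?thesis .
  qed
  show "is_drazin_inverse n M X" unfolding is_drazin_inverse_def
    using X c XMX M g by (intro conjI exI[of _ 1]) (auto simp: numeral_2_eq_2)
  fix Y assume "is_drazin_inverse n M Y"
  then obtain m where Y: "Y \<in> carrier_mat n n" and cY: "M * Y = Y * M" and YMY: "Y * M * Y = Y"
    and pY: "M ^\<^sub>m (m + 1) * Y = M ^\<^sub>m m" unfolding is_drazin_inverse_def by blast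
  have comm: "X * M ^\<^sub>m k = M ^\<^sub>m k * X" for k
  proof (induction k)
    case 0
    then show ?case using X M by simp
  next
    case (Suc k)
    have "X * M ^\<^sub>m Suc k = (X * M ^\<^sub>m k) * M" using X M by simp
    also have "\<dots> = M ^\<^sub>m k * (X * M)" unfolding Suc using X M by simp
    also have "\<dots> = M ^\<^sub>m k * (M * X)" using c by simp
    also have "\<dots> = M ^\<^sub>m Suc k * X" using X M by simp
    finally show ?case .
  qed
  have pw: "X ^\<^sub>m k * (M ^\<^sub>m k * M) = M" for k
  proof (induction k)
    case 0
    then show ?case using X M by simp
  next
    case (Suc k)
    have "X ^\<^sub>m Suc k * (M ^\<^sub>m Suc k * M) = X ^\<^sub>m k * ((X * M ^\<^sub>m k) * (M * M))" using X M by simp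
    also have "\<dots> = X ^\<^sub>m k * (M ^\<^sub>m k * (X * (M * M)))" unfolding comm using X M by simp
    also have "\<dots> = X ^\<^sub>m k * (M ^\<^sub>m k * M)" unfolding XMM ..
    finally show ?case using Suc by simp
  qed
  have MMY: "M * (M * Y) = M"
  proof -
    have "M * (M * Y) = M * (Y * M)" using cY by simp
    also have "\<dots> = (X ^\<^sub>m m * (M ^\<^sub>m m * M)) * Y * M" unfolding pw[of m] using M Y by simp
    also have "\<dots> = X ^\<^sub>m m * ((M ^\<^sub>m (m + 1)) * Y) * M" using X M Y by simp
    also have "\<dots> = X ^\<^sub>m m * (M ^\<^sub>m m * M)" unfolding pY using X M by simp
    also have "\<dots> = M" by (rule pw)
    finally show ?thesis .
  qed
  have MYM: "M * (Y * M) = M"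
  proof -
    have "M * (Y * M) = M * (M * Y)" using cY by simp
    thus ?thesis using MMY by simp
  qed
  have XMYM: "X * M = Y * M"
  proof -
    have "X * M = X * (M * (Y * M))" using MYM by simp
    also have "\<dots> = (X * M) * (Y * M)" using X M Y by simp
    finally have 1: "X * M = (X * M) * (Y * M)" .
    have "Y * M = (M * (X * M)) * Y" using MXM cY by simp
    also have "\<dots> = (M * X) * (M * Y)" using X M Y by simp
    also have "\<dots> = (X * M) * (Y * M)" using c cY by simp
    finally show ?thesis using 1 by simp
  qed
  have "X = X * (M * X)" using XMX X M by simp
  also have "\<dots> = X * (X * M)" using c by simp
  also have "\<dots> = X * (Y * M)" using XMYM by simp
  also have "\<dots> = X * (M * Y)" using cY by simp
  also have "\<dots> = (X * M) * Y" using X M Y by simp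
  also have "\<dots> = (Y * M) * Y" using XMYM by simp
  also have "\<dots> = Y" using YMY by simp
  finally show "Y = X" by simp
qed

theorem corollary3p6:
  fixes A B C :: "'a::idom mat" and n :: nat
  assumes "bezout_domain TYPE('a)"
    and "A \<in> carrier_mat n n" and "B \<in> carrier_mat n n" and "C \<in> carrier_mat n n"
    and "A * B * A = A * C * A"
    and "group_invertible n (A * B)" and "group_invertible n (C * A)"
  shows "similar_mat ((A * B) ^\<^sub>m 2 * drazin_inv n (A * B))
                     ((C * A) ^\<^sub>m 2 * drazin_inv n (C * A))"
proof -
  note ms[simp] = assoc_mult_mat[of _ n n _ n _ n] mult_carrier_mat[of _ n n _ n]
  have cM: "A * B \<in> carrier_mat n n" and cN: "C * A \<in> carrier_mat n n" using assms(2-4) by auto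
  obtain X where X: "X \<in> carrier_mat n n" and X1: "A * B * X = X * (A * B)" and X2: "X * (A * B) * X = X"
    and X3: "(A * B) ^\<^sub>m 2 * X = A * B"
    using assms(6) unfolding group_invertible_def by blast
  obtain Y where Y: "Y \<in> carrier_mat n n" and Y1: "C * A * Y = Y * (C * A)" and Y2: "Y * (C * A) * Y = Y"
    and Y3: "(C * A) ^\<^sub>m 2 * Y = C * A"
    using assms(7) unfolding group_invertible_def by blast
  have dX: "drazin_inv n (A * B) = X" by (rule drazin_group[OF cM X X1 X2 X3])
  have dY: "drazin_inv n (C * A) = Y" by (rule drazin_group[OF cN Y Y1 Y2 Y3])
  have X3': "A * B * (A * B) * X = A * B" using X3 cM by (simp add: numeral_2_eq_2)
  have Y3': "C * A * (C * A) * Y = C * A" using Y3 cN by (simp add: numeral_2_eq_2)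
  have "similar_mat (A * B) (C * A)"
    by (rule main_sim[OF assms(1-4) X Y assms(5) X1 X2 X3' Y1 Y2 Y3'])
  then show ?thesis unfolding dX dY X3 Y3 .
qed

end
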